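(* Let $R$ be a ring and $G$ a group such that the group ring $RG$ is a DT ring, and suppose $2\notin\Delta(R)$ and $3\notin\Delta(R)$. Then $G$ is an elementary abelian $2$-group, i.e. $g^2=1$ for all $g\in G$.
   Context: All rings are associative with identity; $U(R)$ is the group of units. $\Delta(R)=\{x\in R: x+u\in U(R)\text{ for all }u\in U(R)\}$. $\mathrm{Tr}(R)=\{x\in R: x^3=x\}$. A ring $R$ is a DT ring if every $r\in R$ can be written $r=e+d$ with $e\in\mathrm{Tr}(R)$ and $d\in\Delta(R)$. $RG$ denotes the group ring. *)

theory Defs
  imports Main "HOL-Library.Poly_Mapping"
begin

text \<open>Group ring RG: finitely supported functions from G to R, i.e. the poly_mapping type
  with the convolution product of HOL-Library.Poly_Mapping, where the group G
  is written additively (class group_add, not necessarily commutative).\<close>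

definition is_unit :: "'a::ring_1 \<Rightarrow> bool" where
  "is_unit x \<longleftrightarrow> (\<exists>y. x * y = 1 \<and> y * x = 1)"

definition Delta :: "'a::ring_1 set" where
  "Delta = {x. \<forall>u. is_unit u \<longrightarrow> is_unit (x + u)}"

definition Tr :: "'a::ring_1 set" where
  "Tr = {x. x ^ 3 = x}"

definition DT_ring :: "'a::ring_1 itself \<Rightarrow> bool" where
  "DT_ring _ \<longleftrightarrow> (\<forall>r::'a. \<exists>e d. e \<in> Tr \<and> d \<in> Delta \<and> r = e + d)"

end

theory Submission
  imports Defs
begin

lemma lookup_single_mult:
  fixes y :: "'g::group_add \<Rightarrow>\<^sub>0 'r::ring_1"
  shows "Poly_Mapping.lookup (Poly_Mapping.single a c * y) (a + x) = c * Poly_Mapping.lookup y x"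
proof -
  have "Poly_Mapping.lookup (Poly_Mapping.single a c * y) (a + x)
     = (\<Sum>l. (c when a = l) * (\<Sum>q. Poly_Mapping.lookup y q when a + x = l + q))"
    by (simp only: lookup_mult lookup_single)
  also have "\<dots> = (\<Sum>l. (c * (\<Sum>q. Poly_Mapping.lookup y q when a + x = l + q)) when a = l)"
    by (simp add: when_mult)
  also have "\<dots> = c * (\<Sum>q. Poly_Mapping.lookup y q when a + x = a + q)"
    by simp
  also have "(\<Sum>q. Poly_Mapping.lookup y q when a + x = a + q) = (\<Sum>q. Poly_Mapping.lookup y q when x = q)"
    by simp
  finally show ?thesis by simp
qed

lemma lookup_mult_single:
  fixes y :: "'g::group_add \<Rightarrow>\<^sub>0 'r::ring_1"
  shows "Poly_Mapping.lookup (y * Poly_Mapping.single a c) (x + a) = Poly_Mapping.lookup y x * c"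
proof -
  have inner: "(\<Sum>q. (c when a = q) when x + a = l + q) = (c when l = x)" for l
  proof -
    have "(\<Sum>q. (c when a = q) when x + a = l + q) = (\<Sum>q. (c when x + a = l + a) when a = q)"
      by (rule Sum_any.cong) (auto simp: when_def)
    also have "\<dots> = (c when x + a = l + a)" by simp
    finally show ?thesis by (auto simp: when_def)
  qed
  have "Poly_Mapping.lookup (y * Poly_Mapping.single a c) (x + a)
     = (\<Sum>l. Poly_Mapping.lookup y l * (\<Sum>q. (c when a = q) when x + a = l + q))"
    by (simp only: lookup_mult lookup_single)
  also have "\<dots> = (\<Sum>l. Poly_Mapping.lookup y l * c when l = x)"
    by (simp only: inner mult_when)
  finally show ?thesis by simp
qed


lemma unit_one: "is_unit (1::'a::ring_1)"
  unfolding is_unit_def by (rule exI[of _ 1]) simp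

lemma unit_mult:
  assumes "is_unit (a::'a::ring_1)" "is_unit b" shows "is_unit (a * b)"
proof -
  obtain a' where a: "a * a' = 1" "a' * a = 1" using assms(1) unfolding is_unit_def by blast
  obtain b' where b: "b * b' = 1" "b' * b = 1" using assms(2) unfolding is_unit_def by blast
  have "a * b * (b' * a') = a * (b * b') * a'" by (simp add: mult.assoc)
  also have "\<dots> = 1" using a b by simp
  finally have 1: "a * b * (b' * a') = 1" .
  have "b' * a' * (a * b) = b' * (a' * a) * b" by (simp add: mult.assoc)
  also have "\<dots> = 1" using a b by simp
  finally have 2: "b' * a' * (a * b) = 1" .
  show ?thesis unfolding is_unit_def using 1 2 by blast
qed

lemma unit_minus:
  assumes "is_unit (a::'a::ring_1)" shows "is_unit (- a)"
  using assms unfolding is_unit_def by (metis minus_mult_minus)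

lemma unit_lr:
  assumes "(a::'a::ring_1) * b = 1" "c * a = 1" shows "is_unit a"
proof -
  have "c = c * (a * b)" using assms by simp
  also have "\<dots> = b" by (metis assms(2) mult.assoc mult_1_left)
  finally show ?thesis using assms unfolding is_unit_def by blast
qed

lemma Delta_unit: "d \<in> Delta \<Longrightarrow> is_unit u \<Longrightarrow> is_unit (d + (u::'a::ring_1))"
  unfolding Delta_def by blast

lemma Delta_unit': "d \<in> Delta \<Longrightarrow> is_unit u \<Longrightarrow> is_unit (u + (d::'a::ring_1))"
  unfolding Delta_def by (metis (mono_tags) mem_Collect_eq add.commute)

lemma Delta_zero: "(0::'a::ring_1) \<in> Delta"
  unfolding Delta_def by simp

lemma Delta_neg:
  assumes "(d::'a::ring_1) \<in> Delta" shows "- d \<in> Delta"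
  unfolding Delta_def
proof (intro CollectI allI impI)
  fix u :: 'a assume "is_unit u"
  then have "is_unit (d + - u)" using assms Delta_unit unit_minus by blast
  then have "is_unit (- (d + - u))" by (rule unit_minus)
  then show "is_unit (- d + u)" by simp
qed

lemma Delta_add:
  assumes "(a::'a::ring_1) \<in> Delta" "b \<in> Delta" shows "a + b \<in> Delta"
  unfolding Delta_def
proof (intro CollectI allI impI)
  fix u :: 'a assume "is_unit u"
  then have "is_unit (b + u)" using assms Delta_unit by blast
  then have "is_unit (a + (b + u))" using assms Delta_unit by blast
  then show "is_unit (a + b + u)" by (simp add: add.assoc)
qed

lemma Delta_diff:
  assumes "(a::'a::ring_1) \<in> Delta" "b \<in> Delta" shows "a - b \<in> Delta"
  using Delta_add[OF assms(1) Delta_neg[OF assms(2)]] by simp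

lemma Delta_lmult:
  assumes "is_unit (v::'a::ring_1)" "d \<in> Delta" shows "v * d \<in> Delta"
  unfolding Delta_def
proof (intro CollectI allI impI)
  fix u :: 'a assume u: "is_unit u"
  obtain v' where v: "v * v' = 1" "v' * v = 1" using assms(1) unfolding is_unit_def by blast
  have "is_unit v'" using v unfolding is_unit_def by blast
  then have "is_unit (v' * u)" using u unit_mult by blast
  then have "is_unit (d + v' * u)" using assms Delta_unit by blast
  then have "is_unit (v * (d + v' * u))" using assms(1) unit_mult by blast
  also have "v * (d + v' * u) = v * d + u"
    by (simp add: distrib_left mult.assoc[symmetric] v)
  finally show "is_unit (v * d + u)" .
qed

lemma Delta_rmult:
  assumes "is_unit (v::'a::ring_1)" "d \<in> Delta" shows "d * v \<in> Delta"
  unfolding Delta_def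
proof (intro CollectI allI impI)
  fix u :: 'a assume u: "is_unit u"
  obtain v' where v: "v * v' = 1" "v' * v = 1" using assms(1) unfolding is_unit_def by blast
  have "is_unit v'" using v unfolding is_unit_def by blast
  then have "is_unit (u * v')" using u unit_mult by blast
  then have "is_unit (d + u * v')" using assms Delta_unit by blast
  then have "is_unit ((d + u * v') * v)" using assms(1) unit_mult by blast
  also have "(d + u * v') * v = d * v + u"
    by (simp add: distrib_right mult.assoc v)
  finally show "is_unit (d * v + u)" .
qed

lemma Delta_sum:
  assumes "finite A" "\<And>i. i \<in> A \<Longrightarrow> f i \<in> (Delta::'a::ring_1 set)"
  shows "sum f A \<in> Delta"
  using assms by (induction A rule: finite_induct) (auto intro: Delta_zero Delta_add)

lemma DT_unit:
  assumes "DT_ring TYPE('a::ring_1)" "is_unit (u::'a)"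
  shows "\<exists>e d. e * e = 1 \<and> d \<in> Delta \<and> u = e + d"
proof -
  obtain e d where ed: "e \<in> Tr" "d \<in> Delta" "u = e + d"
    using assms(1) unfolding DT_ring_def by blast
  have "is_unit (u + - d)" using Delta_unit' Delta_neg ed(2) assms(2) by blast
  then have "is_unit e" using ed by simp
  then obtain e' where e': "e' * e = 1" unfolding is_unit_def by blast
  have e3: "e * e * e = e" using ed(1) unfolding Tr_def by (simp add: power3_eq_cube)
  have "e * e = e' * (e * e * e)" by (simp add: mult.assoc[symmetric] e')
  also have "\<dots> = 1" using e3 e' by simp
  finally show ?thesis using ed by blast
qed

lemma DT_sq:
  assumes "DT_ring TYPE('a::ring_1)" "is_unit (u::'a)"
  shows "u * u - 1 \<in> Delta"
proof -
  obtain e d where ed: "e * e = 1" "d \<in> Delta" "u = e + d" using DT_unit[OF assms] by blast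
  have eu: "is_unit e" using ed(1) unfolding is_unit_def by blast
  have "u * u - 1 = d * e + u * d"
    by (simp add: ed(3) algebra_simps ed(1))
  moreover have "d * e \<in> Delta" using Delta_rmult eu ed(2) by blast
  moreover have "u * d \<in> Delta" using Delta_lmult assms(2) ed(2) by blast
  ultimately show ?thesis using Delta_add by metis
qed


lemma numeral_commute: "(numeral n :: 'a::ring_1) * y = y * numeral n"
  using mult_of_nat_commute[of "numeral n" y] by simp

lemma single0_unit:
  assumes "is_unit (w::'r::ring_1)"
  shows "is_unit (Poly_Mapping.single (0::'g::group_add) w)"
proof -
  obtain w' where w: "w * w' = 1" "w' * w = 1" using assms unfolding is_unit_def by blast
  have "Poly_Mapping.single (0::'g) w * Poly_Mapping.single 0 w' = 1"
       "Poly_Mapping.single (0::'g) w' * Poly_Mapping.single 0 w = 1"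
    by (simp_all add: mult_single w)
  then show ?thesis unfolding is_unit_def by blast
qed

lemma single0_unit_back:
  assumes "is_unit (Poly_Mapping.single (0::'g::group_add) (w::'r::ring_1))"
  shows "is_unit w"
proof -
  obtain y where y: "Poly_Mapping.single (0::'g) w * y = 1" "y * Poly_Mapping.single 0 w = 1"
    using assms unfolding is_unit_def by blast
  have "Poly_Mapping.lookup (Poly_Mapping.single (0::'g) w * y) (0 + 0) = w * Poly_Mapping.lookup y 0"
    by (rule lookup_single_mult)
  then have 1: "w * Poly_Mapping.lookup y 0 = 1" using y(1) by simp
  have "Poly_Mapping.lookup (y * Poly_Mapping.single (0::'g) w) (0 + 0) = Poly_Mapping.lookup y 0 * w"
    by (rule lookup_mult_single)
  then have 2: "Poly_Mapping.lookup y 0 * w = 1" using y(2) by simp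
  show ?thesis unfolding is_unit_def using 1 2 by blast
qed

lemma numeral_Delta:
  assumes DT: "DT_ring TYPE('g::group_add \<Rightarrow>\<^sub>0 'r::ring_1)"
    and u: "is_unit ((numeral n::'r) * numeral n - 1)"
  shows "(numeral n::'r) \<in> Delta"
  unfolding Delta_def
proof (intro CollectI allI impI)
  fix w :: 'r assume w: "is_unit w"
  define W where "W = Poly_Mapping.single (0::'g) w"
  have Wu: "is_unit W" unfolding W_def using single0_unit w by blast
  obtain e d where ed: "e * e = 1" "d \<in> Delta" "W = e + d" using DT_unit[OF DT Wu] by blast
  define C where "C = (numeral n :: 'g \<Rightarrow>\<^sub>0 'r)"
  have CC: "C * C - 1 = Poly_Mapping.single (0::'g) ((numeral n::'r) * numeral n - 1)"
  proof -
    have "Poly_Mapping.single (0::'g) (x * y - 1) = Poly_Mapping.single 0 x * Poly_Mapping.single 0 y - 1" for x y :: 'r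
      by (simp add: mult_single single_diff)
    from this[of "numeral n" "numeral n"] show ?thesis unfolding C_def by (simp only: single_numeral)
  qed
  have CCu: "is_unit (C * C - 1)" unfolding CC using single0_unit u by blast
  then obtain T where T: "(C * C - 1) * T = 1" "T * (C * C - 1) = 1" unfolding is_unit_def by blast
  have eC: "e * C = C * e" unfolding C_def by (simp add: numeral_commute)
  have p1: "(C + e) * (C - e) = C * C - 1"
    by (simp add: algebra_simps eC ed(1))
  have p2: "(C - e) * (C + e) = C * C - 1"
    by (simp add: algebra_simps eC ed(1))
  have "(C + e) * ((C - e) * T) = 1" by (simp add: mult.assoc[symmetric] p1 T)
  moreover have "(T * (C - e)) * (C + e) = 1" by (simp add: mult.assoc p2 T)
  ultimately have "is_unit (C + e)" using unit_lr by blast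
  then have "is_unit (C + e + d)" using Delta_unit' ed(2) by blast
  also have "C + e + d = Poly_Mapping.single 0 (numeral n + w)"
    by (simp add: C_def add.assoc ed(3)[symmetric] W_def single_add)
  finally show "is_unit (numeral n + w)" by (rule single0_unit_back)
qed


lemma alt_sum_odd:
  assumes "odd n" shows "(\<Sum>i<n. (-1::'a::ring_1)^i) = 1"
proof -
  from assms obtain m where n: "n = 2 * m + 1" by (rule oddE)
  have "(\<Sum>i<2 * m + 1. (-1::'a)^i) = 1"
    by (induction m) (simp_all add: algebra_simps)
  then show ?thesis using n by simp
qed
lemma geom_sum:
  "(\<Sum>i<n. (H::'a::ring_1)^i) * (1 - H) = 1 - H^n"
proof (induction n)
  case 0 then show ?case by simp
next
  case (Suc n)
  have "(\<Sum>i<Suc n. H^i) * (1 - H) = (\<Sum>i<n. H^i) * (1 - H) + H^n * (1 - H)"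
    by (simp add: distrib_right)
  also have "\<dots> = 1 - H^n + (H^n - H^n * H)" using Suc by (simp add: right_diff_distrib)
  also have "\<dots> = 1 - H^Suc n" by (simp add: power_Suc2 power_commutes)
  finally show ?case .
qed

lemma lookup_one_minus_single:
  assumes "h \<noteq> 0"
  shows "Poly_Mapping.lookup (1 - Poly_Mapping.single (h::'g::group_add) (1::'r::ring_1)) 0 = 1"
  using assms by (simp add: lookup_minus lookup_single_not_eq)

lemma two_unit_from_odd:
  fixes H :: "'g::group_add \<Rightarrow>\<^sub>0 'r::ring_1"
  assumes H: "H = Poly_Mapping.single h 1" "h \<noteq> 0" and Hn: "H^n = 1" and odd: "odd n"
    and D: "\<And>i. H^i - 1 \<in> Delta"
  shows "is_unit (2::'r)"
proof -
  define w where "w = (\<Sum>i<n. (-1)^i * H^i)"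
  define z where "z = (\<Sum>i<n. if odd i then H^i else 0)"
  have "w - 1 = (\<Sum>i<n. (-1)^i * (H^i - 1))"
    by (simp add: w_def right_diff_distrib sum_subtractf alt_sum_odd[OF odd])
  also have "\<dots> \<in> Delta"
  proof (rule Delta_sum)
    fix i assume "i \<in> {..<n}"
    show "(-1)^i * (H^i - 1) \<in> Delta"
      using Delta_neg[OF D[of i]] by (cases "even i") (simp_all add: D)
  qed simp
  finally have wD: "w - 1 \<in> Delta" .
  have wu: "is_unit w" using Delta_unit'[OF wD unit_one] by simp
  then obtain w' where w': "w' * w = 1" unfolding is_unit_def by blast
  have trm: "H^i = (-1)^i * H^i + ((if odd i then H^i else 0) + (if odd i then H^i else 0))" for i
    by (cases "even i") simp_all
  have N: "(\<Sum>i<n. H^i) = w + (z + z)"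
    unfolding w_def z_def by (subst trm) (simp only: sum.distrib)
  have "(w + (z + z)) * (1 - H) = 0" using geom_sum[of H n] Hn N by simp
  then have "w * (1 - H) + (z + z) * (1 - H) = 0" by (metis distrib_right)
  then have wz: "w * (1 - H) = - ((z + z) * (1 - H))"
    by (simp only: eq_neg_iff_add_eq_0)
  define q where "q = - (w' * (z * (1 - H)))"
  have "1 - H = w' * (w * (1 - H))" by (simp add: mult.assoc[symmetric] w')
  also have "\<dots> = w' * (- ((z + z) * (1 - H)))" by (simp only: wz)
  also have "\<dots> = q + q" unfolding q_def by (simp only: distrib_right minus_add_distrib distrib_left mult_minus_right)
  finally have "Poly_Mapping.lookup (1 - H) 0 = Poly_Mapping.lookup (q + q) 0" by simp
  then have "1 = Poly_Mapping.lookup q 0 + Poly_Mapping.lookup q 0"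
    using lookup_one_minus_single[OF H(2), where 'r='r] H(1) by (simp add: lookup_add)
  then have "2 * Poly_Mapping.lookup q 0 = 1" "Poly_Mapping.lookup q 0 * 2 = 1"
    by (simp_all add: mult_2 mult_2_right)
  then show ?thesis unfolding is_unit_def by blast
qed

lemma three_unit_from_inv:
  fixes K :: "'g::group_add \<Rightarrow>\<^sub>0 'r::ring_1"
  assumes K: "K = Poly_Mapping.single k 1" "k \<noteq> 0" and KK: "K * K = 1" and D: "K - 1 \<in> Delta"
  shows "is_unit (3::'r)"
proof -
  define w where "w = 1 - (K + K)"
  have dd: "1 - K + (1 - K) \<in> Delta" using Delta_add[OF Delta_neg[OF D] Delta_neg[OF D]] by simp
  have "is_unit (- 1 + (1 - K + (1 - K)))" by (rule Delta_unit'[OF dd unit_minus[OF unit_one]])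
  moreover have "- 1 + (1 - K + (1 - K)) = w" by (simp add: w_def algebra_simps)
  ultimately have wu: "is_unit w" by simp
  then obtain w' where w': "w' * w = 1" unfolding is_unit_def by blast
  have "(1 + K) * (1 - K) = 0" by (simp add: algebra_simps KK)
  moreover have "1 + K = w + (K + K + K)" by (simp add: w_def)
  ultimately have "(w + (K + K + K)) * (1 - K) = 0" by simp
  then have "w * (1 - K) + (K + K + K) * (1 - K) = 0" by (metis distrib_right)
  then have wz: "w * (1 - K) = - ((K + K + K) * (1 - K))"
    by (simp only: eq_neg_iff_add_eq_0)
  define q where "q = - (w' * (K * (1 - K)))"
  have "1 - K = w' * (w * (1 - K))" by (simp add: mult.assoc[symmetric] w')
  also have "\<dots> = w' * (- ((K + K + K) * (1 - K)))" by (simp only: wz)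
  also have "\<dots> = q + q + q" unfolding q_def by (simp only: distrib_right minus_add_distrib distrib_left mult_minus_right)
  finally have "Poly_Mapping.lookup (1 - K) 0 = Poly_Mapping.lookup (q + q + q) 0" by simp
  then have "1 = Poly_Mapping.lookup q 0 + Poly_Mapping.lookup q 0 + Poly_Mapping.lookup q 0"
    using lookup_one_minus_single[OF K(2), where 'r='r] K(1) by (simp add: lookup_add)
  then have "3 * Poly_Mapping.lookup q 0 = 1" "Poly_Mapping.lookup q 0 * 3 = 1"
  proof -
    have t: "(3::'r) = 1 + 1 + 1" by simp
    show "3 * Poly_Mapping.lookup q 0 = 1" "Poly_Mapping.lookup q 0 * 3 = 1"
      using \<open>1 = _\<close> unfolding t by (simp_all only: distrib_left distrib_right mult_1_left mult_1_right)
  qed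
  then show ?thesis unfolding is_unit_def by blast
qed


lemma infinite_order_contra:
  fixes h :: "'g::group_add"
  assumes one: "(1::'r::ring_1) \<noteq> 0"
    and inj: "inj (\<lambda>k. ((+) h ^^ k) 0)"
    and wu: "is_unit (1 - Poly_Mapping.single h (1::'r) + Poly_Mapping.single (h + h) 1)"
  shows False
proof -
  define pw where "pw k = ((+) h ^^ k) 0" for k
  have pw0: "pw 0 = 0" by (simp add: pw_def)
  have pwS: "pw (Suc k) = h + pw k" for k by (simp add: pw_def)
  have pwc: "pw k + h = h + pw k" for k
    by (induction k) (simp_all add: pw0 pwS add.assoc)
  have pwinj: "pw a = pw b \<Longrightarrow> a = b" for a b using inj unfolding pw_def inj_def by blast
  define H1 where "H1 = Poly_Mapping.single h (1::'r)"
  define H2 where "H2 = Poly_Mapping.single (h + h) (1::'r)"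
  obtain y where y: "(1 - H1 + H2) * y = 1" using wu unfolding is_unit_def H1_def H2_def by blast
  have L1: "Poly_Mapping.lookup (H1 * y) x = Poly_Mapping.lookup y (- h + x)" for x
    using lookup_single_mult[of h "1::'r" y "- h + x"] unfolding H1_def by (simp add: add.assoc[symmetric])
  have L2: "Poly_Mapping.lookup (H2 * y) x = Poly_Mapping.lookup y (- (h + h) + x)" for x
    using lookup_single_mult[of "h + h" "1::'r" y "- (h + h) + x"] unfolding H2_def
    by (simp only: add.assoc[symmetric] right_minus add_0_left mult_1_left)
  have F: "(1 when x = 0) = Poly_Mapping.lookup y x - Poly_Mapping.lookup y (- h + x)
            + Poly_Mapping.lookup y (- (h + h) + x)" for x
  proof -
    have "(1 - H1 + H2) * y = y - H1 * y + H2 * y" by (simp add: algebra_simps)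
    then have "Poly_Mapping.lookup 1 x = Poly_Mapping.lookup (y - H1 * y + H2 * y) x" using y by simp
    then show ?thesis by (simp only: lookup_one lookup_add lookup_minus L1 L2)
  qed
  have ynz: "y \<noteq> 0"
  proof
    assume "y = 0"
    then have "(1::'g \<Rightarrow>\<^sub>0 'r) = 0" using y by simp
    then have "Poly_Mapping.lookup (1::'g \<Rightarrow>\<^sub>0 'r) 0 = 0" by simp
    then show False using one by simp
  qed
  have fin: "finite (Poly_Mapping.keys y)" by (rule finite_keys)
  have top: "\<exists>m. pw (Suc (Suc m)) + x0 = 0" if x0: "x0 \<in> Poly_Mapping.keys y" for x0
  proof -
    define K where "K = {k. pw k + x0 \<in> Poly_Mapping.keys y}"
    have "inj (\<lambda>k. pw k + x0)" by (rule injI) (simp add: pwinj)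
    then have finK: "finite K" unfolding K_def using finite_vimageI[OF fin, of "\<lambda>k. pw k + x0"] by (simp add: vimage_def)
    have "0 \<in> K" unfolding K_def using x0 pw0 by simp
    define m where "m = Max K"
    have mK: "m \<in> K" unfolding m_def using Max_in[OF finK] \<open>0 \<in> K\<close> by blast
    have n1: "Suc m \<notin> K" using Max_ge[OF finK, of "Suc m"] unfolding m_def[symmetric] by linarith
    have n2: "Suc (Suc m) \<notin> K" using Max_ge[OF finK, of "Suc (Suc m)"] unfolding m_def[symmetric] by linarith
    define P where "P = pw (Suc (Suc m)) + x0"
    have a: "Poly_Mapping.lookup y P = 0" using n2 unfolding K_def P_def by (simp add: in_keys_iff)
    have b: "Poly_Mapping.lookup y (- h + P) = 0"
    proof -
      have "- h + P = pw (Suc m) + x0" unfolding P_def by (simp add: pwS add.assoc)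
      then show ?thesis using n1 unfolding K_def by (simp add: in_keys_iff)
    qed
    have c: "Poly_Mapping.lookup y (- (h + h) + P) \<noteq> 0"
    proof -
      have "- (h + h) + P = pw m + x0" unfolding P_def pwS by (simp only: minus_add add.assoc minus_add_cancel)
      then show ?thesis using mK unfolding K_def by (simp add: in_keys_iff)
    qed
    have "(1 when P = 0) \<noteq> (0::'r)" using F[of P] a b c by simp
    then have "P = 0" by (simp add: when_def split: if_splits)
    then show ?thesis unfolding P_def by blast
  qed
  define J where "J = {k. - pw k \<in> Poly_Mapping.keys y}"
  have "inj (\<lambda>k. - pw k)" by (rule injI) (simp add: pwinj)
  then have finJ: "finite J" unfolding J_def using finite_vimageI[OF fin, of "\<lambda>k. - pw k"] by (simp add: vimage_def)
  obtain x0 where x0: "x0 \<in> Poly_Mapping.keys y" using ynz by (metis all_not_in_conv keys_eq_empty)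
  obtain m0 where "pw (Suc (Suc m0)) + x0 = 0" using top[OF x0] by blast
  then have "x0 = - pw (Suc (Suc m0))" using minus_unique by metis
  then have JNE: "Suc (Suc m0) \<in> J" unfolding J_def using x0 by simp
  define j where "j = Max J"
  have jJ: "j \<in> J" unfolding j_def using Max_in[OF finJ] JNE by blast
  have nj1: "Suc j \<notin> J" using Max_ge[OF finJ, of "Suc j"] unfolding j_def[symmetric] by linarith
  have nj2: "Suc (Suc j) \<notin> J" using Max_ge[OF finJ, of "Suc (Suc j)"] unfolding j_def[symmetric] by linarith
  define B where "B = - pw j"
  have BK: "B \<in> Poly_Mapping.keys y" using jJ unfolding J_def B_def by simp
  obtain m where "pw (Suc (Suc m)) + B = 0" using top[OF BK] by blast
  then have "pw (Suc (Suc m)) = pw j" unfolding B_def by (simp add: diff_conv_add_uminus[symmetric])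
  then have jS: "j = Suc (Suc m)" using pwinj by blast
  have a: "Poly_Mapping.lookup y B \<noteq> 0" using BK by (simp add: in_keys_iff)
  have b: "Poly_Mapping.lookup y (- h + B) = 0"
  proof -
    have "- pw (Suc j) = - h + B" unfolding B_def pwS pwc[symmetric] by (simp add: minus_add)
    then show ?thesis using nj1 unfolding J_def by (simp add: in_keys_iff)
  qed
  have c: "Poly_Mapping.lookup y (- (h + h) + B) = 0"
  proof -
    have "h + (h + pw j) = pw j + h + h" using pwc[of j] by (metis add.assoc)
    then have "- pw (Suc (Suc j)) = - (h + h) + B" unfolding B_def pwS by (simp add: minus_add add.assoc)
    then show ?thesis using nj2 unfolding J_def by (simp add: in_keys_iff)
  qed
  have "(1 when B = 0) \<noteq> (0::'r)" using F[of B] a b c by simp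
  then have "B = 0" by (simp add: when_def split: if_splits)
  then have "pw j = pw 0" unfolding B_def pw0 by simp
  then have "j = 0" using pwinj by blast
  then show False using jS by simp
qed


theorem theorem3p9:
  assumes "DT_ring TYPE('g::group_add \<Rightarrow>\<^sub>0 'r::ring_1)"
    and "(2::'r) \<notin> Delta"
    and "(3::'r) \<notin> Delta"
  shows "\<forall>g::'g. g + g = 0"
proof (rule ccontr)
  note DT = assms(1)
  assume "\<not> (\<forall>g::'g. g + g = 0)"
  then obtain g :: 'g where gg: "g + g \<noteq> 0" by blast
  have one: "(1::'r) \<noteq> 0"
  proof
    assume o: "(1::'r) = 0"
    have "(2::'r) \<in> Delta" unfolding Delta_def is_unit_def
    proof (intro CollectI allI impI)
      fix u :: 'r
      have "\<And>x::'r. x = 0" by (metis o mult_1_right mult_zero_right)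
      then show "\<exists>y. (2 + u) * y = 1 \<and> y * (2 + u) = 1" by metis
    qed
    then show False using assms(2) by blast
  qed
  have no3: "\<not> is_unit (3::'r)"
  proof
    assume "is_unit (3::'r)"
    moreover have "(2::'r) * 2 - 1 = 3" by simp
    ultimately have "is_unit ((2::'r) * 2 - 1)" by simp
    then have "(2::'r) \<in> Delta" using numeral_Delta[OF DT, of "num.Bit0 num.One"] by simp
    then show False using assms(2) by blast
  qed
  have no2: "\<not> is_unit (2::'r)"
  proof
    assume u2: "is_unit (2::'r)"
    have "is_unit ((2::'r) * (2 * 2))" using u2 unit_mult by blast
    moreover have "(3::'r) * 3 - 1 = 2 * (2 * 2)" by simp
    ultimately have "is_unit ((3::'r) * 3 - 1)" by simp
    then have "(3::'r) \<in> Delta" using numeral_Delta[OF DT, of "num.Bit1 num.One"] by simp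
    then show False using assms(3) by blast
  qed
  define h where "h = g + g"
  have h0: "h \<noteq> 0" using gg h_def by simp
  define U where "U = Poly_Mapping.single g (1::'r)"
  define H where "H = Poly_Mapping.single h (1::'r)"
  have Uu: "is_unit U"
  proof -
    have "U * Poly_Mapping.single (- g) 1 = 1" "Poly_Mapping.single (- g) 1 * U = 1"
      unfolding U_def by (simp_all add: mult_single)
    then show ?thesis unfolding is_unit_def by blast
  qed
  have HUU: "H = U * U" unfolding H_def U_def h_def by (simp add: mult_single)
  have Hu: "is_unit H" using HUU Uu unit_mult by simp
  have HD: "H - 1 \<in> Delta" using DT_sq[OF DT Uu] HUU by simp
  have HiD: "H^i - 1 \<in> Delta" for i
  proof (induction i)
    case 0 then show ?case by (simp add: Delta_zero)
  next
    case (Suc i)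
    have eq: "H^Suc i - 1 = H * (H^i - 1) + (H - 1)" by (simp add: algebra_simps)
    show ?case unfolding eq by (rule Delta_add[OF Delta_lmult[OF Hu Suc] HD])
  qed
  define pw where "pw k = ((+) h ^^ k) 0" for k
  have pw0: "pw 0 = 0" by (simp add: pw_def)
  have pwS: "pw (Suc k) = h + pw k" for k by (simp add: pw_def)
  have pwadd: "pw (a + b) = pw a + pw b" for a b
    by (induction a) (simp_all add: pw0 pwS add.assoc)
  have Hpow: "H^k = Poly_Mapping.single (pw k) 1" for k
    by (induction k) (simp_all add: pw0 pwS H_def mult_single)
  have single1: "Poly_Mapping.single x (1::'r) = 1 \<longleftrightarrow> x = 0" for x :: 'g
  proof
    assume a: "Poly_Mapping.single x (1::'r) = 1"
    show "x = 0"
    proof (rule ccontr)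
      assume "x \<noteq> 0"
      have "Poly_Mapping.lookup (Poly_Mapping.single x (1::'r)) x = Poly_Mapping.lookup (1::'g \<Rightarrow>\<^sub>0 'r) x"
        using a by simp
      then show False using \<open>x \<noteq> 0\<close> one by (simp add: lookup_one)
    qed
  qed simp
  show False
  proof (cases "\<exists>n>0. H^n = 1")
    case True
    define n where "n = (LEAST n. 0 < n \<and> H^n = 1)"
    have nP: "0 < n \<and> H^n = 1" unfolding n_def using LeastI_ex[OF True] .
    have nmin: "0 < k \<Longrightarrow> k < n \<Longrightarrow> H^k \<noteq> 1" for k
      using not_less_Least[of k "\<lambda>n. 0 < n \<and> H^n = 1"] unfolding n_def[symmetric] by blast
    show False
    proof (cases "odd n")
      case True
      have "is_unit (2::'r)"
        using two_unit_from_odd[OF H_def h0 _ True HiD] nP by blast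
      then show False using no2 by blast
    next
      case False
      then obtain m where nm: "n = m + m" by (metis evenE mult_2)
      have m0: "0 < m" "m < n" using nP nm by auto
      define K where "K = H^m"
      have K1: "K = Poly_Mapping.single (pw m) 1" unfolding K_def by (rule Hpow)
      have "K \<noteq> 1" unfolding K_def using nmin m0 by blast
      then have pm: "pw m \<noteq> 0" using K1 by auto
      have KK: "K * K = 1" unfolding K_def using nP nm by (simp add: power_add[symmetric])
      have "is_unit (3::'r)"
        using three_unit_from_inv[OF K1 pm KK] HiD K_def by blast
      then show False using no3 by blast
    qed
  next
    case False
    have inj: "inj (\<lambda>k. ((+) h ^^ k) 0)"
    proof (rule injI)
      fix a b assume ab: "((+) h ^^ a) 0 = ((+) h ^^ b) 0"
      then have pab: "pw a = pw b" unfolding pw_def .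
      have key: "pw a = pw b \<Longrightarrow> a < b \<Longrightarrow> False" for a b
      proof -
        assume e: "pw a = pw b" and lt: "a < b"
        have "pw b = pw (b - a) + pw a" using pwadd[of "b - a" a] lt by simp
        then have "pw (b - a) + pw b = 0 + pw b" using e by simp
        then have "pw (b - a) = 0" by (rule add_right_imp_eq)
        then have "H^(b - a) = 1" using Hpow by simp
        moreover have "0 < b - a" using lt by simp
        ultimately show False using False by blast
      qed
      show "a = b" using key[OF pab] key[OF pab[symmetric]] by (metis linorder_neqE_nat)
    qed
    have "H * (H - 1) \<in> Delta" using Delta_lmult[OF Hu HD] .
    then have "is_unit (1 + H * (H - 1))" using Delta_unit'[OF _ unit_one] by blast
    moreover have "1 + H * (H - 1) = 1 - Poly_Mapping.single h (1::'r) + Poly_Mapping.single (h + h) 1"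
      unfolding H_def by (simp add: algebra_simps mult_single)
    ultimately show False using infinite_order_contra[OF one inj] by simp
  qed
qed

end
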